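(* Let $G$ be a finite induced regular group of odd order. If $C_G(x)\neq \beta_G(x)\cup Z(G)$ for all $x\in G$, then $G/Z(G)$ is an elementary $p$-group for some prime $p$.
   Context: For a finite group $G$, $C_G(x)$ denotes the centralizer of $x\in G$ and $Z(G)$ the center; $\beta_G(x)=\{y\in G\mid C_G(y)=C_G(x)\}$. The non-centralizer graph $\Upsilon_G$ is the simple graph with vertex set $G$ in which two distinct vertices $x,y$ are adjacent iff $C_G(x)\neq C_G(y)$; the induced non-centralizer graph $\Upsilon_{G\setminus Z(G)}$ is its induced subgraph on $G\setminus Z(G)$. $G$ is called induced regular if $\Upsilon_{G\setminus Z(G)}$ is a regular graph. A group is called an elementary $p$-group if every non-identity element has order exactly $p$ (it need not be abelian). *)

theory Defs
  imports "HOL-Algebra.Algebra"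
begin

definition centralizer :: "('a, 'b) monoid_scheme \<Rightarrow> 'a \<Rightarrow> 'a set" where
  "centralizer G x = {y \<in> carrier G. x \<otimes>\<^bsub>G\<^esub> y = y \<otimes>\<^bsub>G\<^esub> x}"

definition center :: "('a, 'b) monoid_scheme \<Rightarrow> 'a set" where
  "center G = {z \<in> carrier G. \<forall>y \<in> carrier G. z \<otimes>\<^bsub>G\<^esub> y = y \<otimes>\<^bsub>G\<^esub> z}"

definition beta :: "('a, 'b) monoid_scheme \<Rightarrow> 'a \<Rightarrow> 'a set" where
  "beta G x = {y \<in> carrier G. centralizer G y = centralizer G x}"

definition nc_adj :: "('a, 'b) monoid_scheme \<Rightarrow> 'a \<Rightarrow> 'a \<Rightarrow> bool" where
  "nc_adj G x y \<longleftrightarrow> x \<noteq> y \<and> centralizer G x \<noteq> centralizer G y"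

text \<open>Degree of x in the induced non-centralizer graph on G minus Z(G).\<close>
definition induced_degree :: "('a, 'b) monoid_scheme \<Rightarrow> 'a \<Rightarrow> nat" where
  "induced_degree G x = card {y \<in> carrier G - center G. nc_adj G x y}"

definition induced_regular :: "('a, 'b) monoid_scheme \<Rightarrow> bool" where
  "induced_regular G \<longleftrightarrow> (\<exists>k. \<forall>x \<in> carrier G - center G. induced_degree G x = k)"

text \<open>Elementary p-group: every non-identity element has order exactly p (not necessarily abelian).\<close>
definition elementary_p_group :: "('a, 'b) monoid_scheme \<Rightarrow> nat \<Rightarrow> bool" where
  "elementary_p_group H p \<longleftrightarrow> Factorial_Ring.prime p \<and>
     (\<forall>a \<in> carrier H. a \<noteq> \<one>\<^bsub>H\<^esub> \<longrightarrow> group.ord H a = p)"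

end

theory Submission
  imports Defs
begin

context group begin

lemma comm_inv:
  assumes x: "x \<in> carrier G" and u: "u \<in> carrier G" and e: "x \<otimes> u = u \<otimes> x"
  shows "inv x \<otimes> u = u \<otimes> inv x"
proof -
  have "x \<otimes> (u \<otimes> inv x) = (x \<otimes> u) \<otimes> inv x" using x u by (simp add: m_assoc)
  also have "\<dots> = (u \<otimes> x) \<otimes> inv x" using e by simp
  also have "\<dots> = u" using x u by (simp add: m_assoc)
  finally have "x \<otimes> (u \<otimes> inv x) = u" .
  then show ?thesis using inv_solve_left'[of "u \<otimes> inv x" x u] x u by simp
qed

lemma comm_mult:
  assumes x: "x \<in> carrier G" and y: "y \<in> carrier G" and u: "u \<in> carrier G"
    and e1: "x \<otimes> u = u \<otimes> x" and e2: "y \<otimes> u = u \<otimes> y"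
  shows "(x \<otimes> y) \<otimes> u = u \<otimes> (x \<otimes> y)"
proof -
  have "(x \<otimes> y) \<otimes> u = x \<otimes> (y \<otimes> u)" using x y u by (simp add: m_assoc)
  also have "\<dots> = x \<otimes> (u \<otimes> y)" using e2 by simp
  also have "\<dots> = (x \<otimes> u) \<otimes> y" using x y u by (simp add: m_assoc)
  also have "\<dots> = (u \<otimes> x) \<otimes> y" using e1 by simp
  also have "\<dots> = u \<otimes> (x \<otimes> y)" using x y u by (simp add: m_assoc)
  finally show ?thesis .
qed

lemma cent_sub: "centralizer G x \<subseteq> carrier G"
  by (auto simp: centralizer_def)

lemma cent_self: "x \<in> carrier G \<Longrightarrow> x \<in> centralizer G x"
  by (auto simp: centralizer_def)

lemma cent_iff: "u \<in> centralizer G x \<longleftrightarrow> u \<in> carrier G \<and> x \<otimes> u = u \<otimes> x"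
  by (auto simp: centralizer_def)

lemma cent_sym: "x \<in> carrier G \<Longrightarrow> u \<in> centralizer G x \<Longrightarrow> x \<in> centralizer G u"
  by (auto simp: centralizer_def)

lemma cent_sym_iff: "x \<in> carrier G \<Longrightarrow> u \<in> carrier G \<Longrightarrow> u \<in> centralizer G x \<longleftrightarrow> x \<in> centralizer G u"
  by (auto simp: centralizer_def)

lemma cent_mult_closed: "u \<in> centralizer G x \<Longrightarrow> v \<in> centralizer G x \<Longrightarrow> x \<in> carrier G \<Longrightarrow> u \<otimes> v \<in> centralizer G x"
  unfolding cent_iff using comm_mult[of u v x] by auto

lemma cent_inv_closed: "u \<in> centralizer G x \<Longrightarrow> x \<in> carrier G \<Longrightarrow> inv u \<in> centralizer G x"
  unfolding cent_iff using comm_inv[of u x] by auto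

lemma cent_pow_closed: "u \<in> centralizer G x \<Longrightarrow> x \<in> carrier G \<Longrightarrow> u [^] (n::nat) \<in> centralizer G x"
proof (induct n)
  case 0
  then show ?case by (simp add: cent_iff)
next
  case (Suc n)
  then show ?case using cent_mult_closed by simp
qed

lemma center_iff: "z \<in> center G \<longleftrightarrow> z \<in> carrier G \<and> centralizer G z = carrier G"
  by (auto simp: center_def centralizer_def)

lemma center_sub: "center G \<subseteq> carrier G"
  by (auto simp: center_def)

lemma center_comm: "z \<in> center G \<Longrightarrow> y \<in> carrier G \<Longrightarrow> z \<otimes> y = y \<otimes> z"
  by (auto simp: center_def)

lemma center_one: "\<one> \<in> center G"
  by (auto simp: center_def)

lemma center_mult: "a \<in> center G \<Longrightarrow> b \<in> center G \<Longrightarrow> a \<otimes> b \<in> center G"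
proof -
  assume a: "a \<in> center G" and b: "b \<in> center G"
  have ac: "a \<in> carrier G" and bc: "b \<in> carrier G" using a b by (auto simp: center_def)
  have "\<forall>y \<in> carrier G. (a \<otimes> b) \<otimes> y = y \<otimes> (a \<otimes> b)"
  proof
    fix y assume y: "y \<in> carrier G"
    have "a \<otimes> y = y \<otimes> a" "b \<otimes> y = y \<otimes> b" using a b y by (auto simp: center_def)
    then show "(a \<otimes> b) \<otimes> y = y \<otimes> (a \<otimes> b)" by (rule comm_mult[OF ac bc y])
  qed
  then show ?thesis using ac bc by (simp add: center_def)
qed

lemma center_inv: "a \<in> center G \<Longrightarrow> inv a \<in> center G"
proof -
  assume a: "a \<in> center G"
  have ac: "a \<in> carrier G" using a by (auto simp: center_def)
  have "\<forall>y \<in> carrier G. inv a \<otimes> y = y \<otimes> inv a"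
  proof
    fix y assume y: "y \<in> carrier G"
    have "a \<otimes> y = y \<otimes> a" using a y by (auto simp: center_def)
    then show "inv a \<otimes> y = y \<otimes> inv a" by (rule comm_inv[OF ac y])
  qed
  then show ?thesis using ac by (simp add: center_def)
qed

lemma center_pow: "a \<in> center G \<Longrightarrow> a [^] (n::nat) \<in> center G"
  by (induct n) (auto simp: center_one center_mult)

lemma cent_pow: "x \<in> carrier G \<Longrightarrow> centralizer G x \<subseteq> centralizer G (x [^] (n::nat))"
  unfolding centralizer_def by (auto simp: group_commutes_pow)

lemma cent_int: "x \<in> carrier G \<Longrightarrow> y \<in> carrier G \<Longrightarrow> centralizer G x \<inter> centralizer G y \<subseteq> centralizer G (x \<otimes> y)"
proof
  fix u assume x: "x \<in> carrier G" and y: "y \<in> carrier G" and u: "u \<in> centralizer G x \<inter> centralizer G y"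
  then have uc: "u \<in> carrier G" and e1: "x \<otimes> u = u \<otimes> x" and e2: "y \<otimes> u = u \<otimes> y"
    by (auto simp: cent_iff)
  show "u \<in> centralizer G (x \<otimes> y)" using comm_mult[OF x y uc e1 e2] uc by (simp add: cent_iff)
qed

lemma cent_inv: "x \<in> carrier G \<Longrightarrow> centralizer G (inv x) = centralizer G x"
proof
  assume x: "x \<in> carrier G"
  show "centralizer G x \<subseteq> centralizer G (inv x)"
    using x comm_inv by (auto simp: cent_iff)
  show "centralizer G (inv x) \<subseteq> centralizer G x"
    using x comm_inv[of "inv x"] by (auto simp: cent_iff)
qed

lemma cent_mult_center: "x \<in> carrier G \<Longrightarrow> z \<in> center G \<Longrightarrow> centralizer G (x \<otimes> z) = centralizer G x"
proof
  assume x: "x \<in> carrier G" and z: "z \<in> center G"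
  have zc: "z \<in> carrier G" using z center_sub by auto
  show "centralizer G x \<subseteq> centralizer G (x \<otimes> z)"
  proof
    fix u assume u: "u \<in> centralizer G x"
    have "u \<in> centralizer G z" using z u cent_sub by (auto simp: center_iff)
    then show "u \<in> centralizer G (x \<otimes> z)" using cent_int[OF x zc] u by blast
  qed
  have izc: "inv z \<in> carrier G" using zc by simp
  have "centralizer G (x \<otimes> z) \<subseteq> centralizer G (x \<otimes> z \<otimes> inv z)"
  proof
    fix u assume u: "u \<in> centralizer G (x \<otimes> z)"
    have "u \<in> centralizer G (inv z)" using center_inv[OF z] u cent_sub by (auto simp: center_iff)
    then show "u \<in> centralizer G (x \<otimes> z \<otimes> inv z)" using cent_int[of "x \<otimes> z" "inv z"] x zc u by blast
  qed
  then show "centralizer G (x \<otimes> z) \<subseteq> centralizer G x"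
    using x zc by (simp add: m_assoc)
qed

lemma odd_sq_center:
  assumes fin: "finite (carrier G)" and od: "odd (order G)"
    and x: "x \<in> carrier G" and sq: "x \<otimes> x \<in> center G"
  shows "x \<in> center G"
proof -
  have "ord x dvd order G" by (rule ord_dvd_group_order[OF x])
  then have o: "odd (ord x)" using od by auto
  have e1: "x [^] (ord x + 1) = x" using x by (simp add: pow_eq_id)
  have e2: "x [^] (ord x + 1) = (x \<otimes> x) [^] ((ord x + 1) div 2)"
  proof -
    have "x \<otimes> x = x [^] (2::nat)" using x by (simp add: numeral_2_eq_2)
    then have "(x \<otimes> x) [^] ((ord x + 1) div 2) = x [^] (2 * ((ord x + 1) div 2))"
      using x by (simp add: nat_pow_pow)
    also have "2 * ((ord x + 1) div 2) = ord x + 1" using o by presburger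
    finally show ?thesis by simp
  qed
  have eq: "(x \<otimes> x) [^] ((ord x + 1) div 2) = x" using e2[symmetric] e1 by (rule trans)
  have c: "(x \<otimes> x) [^] ((ord x + 1) div 2) \<in> center G" by (rule center_pow[OF sq])
  from c[unfolded eq] show ?thesis .
qed

end

locale ncg = group G for G (structure) +
  assumes fin: "finite (carrier G)"
    and oddG: "odd (order G)"
    and reg: "\<And>x y. x \<in> carrier G - center G \<Longrightarrow> y \<in> carrier G - center G \<Longrightarrow> card (beta G x) = card (beta G y)"
    and hyp: "\<And>x. x \<in> carrier G \<Longrightarrow> centralizer G x \<noteq> beta G x \<union> center G"
begin

definition ZC :: "'a \<Rightarrow> 'a set" where
  "ZC x = {a \<in> carrier G. \<forall>u \<in> centralizer G x. a \<otimes> u = u \<otimes> a}"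

definition maxc :: "'a \<Rightarrow> bool" where
  "maxc m \<longleftrightarrow> m \<in> carrier G - center G \<and>
     (\<forall>y \<in> carrier G - center G. centralizer G m \<subseteq> centralizer G y \<longrightarrow> centralizer G y = centralizer G m)"

lemma ZC_carrier: "ZC x \<subseteq> carrier G" by (auto simp: ZC_def)

lemma ZC_cent: "a \<in> ZC x \<Longrightarrow> centralizer G x \<subseteq> centralizer G a"
  by (auto simp: ZC_def cent_iff)

lemma ZC_sub_cent: "x \<in> carrier G \<Longrightarrow> ZC x \<subseteq> centralizer G x"
  using cent_self by (auto simp: ZC_def cent_iff)

lemma center_ZC: "center G \<subseteq> ZC x"
  using cent_sub by (auto simp: ZC_def center_def)

lemma ZC_comm: "x \<in> carrier G \<Longrightarrow> a \<in> ZC x \<Longrightarrow> b \<in> ZC x \<Longrightarrow> a \<otimes> b = b \<otimes> a"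
  using ZC_sub_cent by (auto simp: ZC_def)

lemma ZC_mult: "a \<in> ZC x \<Longrightarrow> b \<in> ZC x \<Longrightarrow> a \<otimes> b \<in> ZC x"
proof -
  assume a: "a \<in> ZC x" and b: "b \<in> ZC x"
  have ac: "a \<in> carrier G" and bc: "b \<in> carrier G" using a b by (auto simp: ZC_def)
  have "\<forall>u \<in> centralizer G x. (a \<otimes> b) \<otimes> u = u \<otimes> (a \<otimes> b)"
  proof
    fix u assume u: "u \<in> centralizer G x"
    have uc: "u \<in> carrier G" using u cent_sub by auto
    have "a \<otimes> u = u \<otimes> a" "b \<otimes> u = u \<otimes> b" using a b u by (auto simp: ZC_def)
    then show "(a \<otimes> b) \<otimes> u = u \<otimes> (a \<otimes> b)" by (rule comm_mult[OF ac bc uc])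
  qed
  then show ?thesis using ac bc by (simp add: ZC_def)
qed

lemma ZC_inv: "a \<in> ZC x \<Longrightarrow> inv a \<in> ZC x"
proof -
  assume a: "a \<in> ZC x"
  have ac: "a \<in> carrier G" using a by (auto simp: ZC_def)
  have "\<forall>u \<in> centralizer G x. inv a \<otimes> u = u \<otimes> inv a"
  proof
    fix u assume u: "u \<in> centralizer G x"
    have uc: "u \<in> carrier G" using u cent_sub by auto
    have "a \<otimes> u = u \<otimes> a" using a u by (auto simp: ZC_def)
    then show "inv a \<otimes> u = u \<otimes> inv a" by (rule comm_inv[OF ac uc])
  qed
  then show ?thesis using ac by (simp add: ZC_def)
qed

lemma ZC_one: "\<one> \<in> ZC x"
  using center_ZC center_one by blast

lemma ZC_pow: "a \<in> ZC x \<Longrightarrow> a [^] (n::nat) \<in> ZC x"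
proof (induct n)
  case 0
  then show ?case using ZC_one by simp
next
  case (Suc n)
  then show ?case using ZC_mult by simp
qed

lemma beta_carrier: "beta G x \<subseteq> carrier G" by (auto simp: beta_def)

lemma beta_noncentral: "x \<in> carrier G - center G \<Longrightarrow> beta G x \<subseteq> carrier G - center G"
proof
  fix y assume x: "x \<in> carrier G - center G" and y: "y \<in> beta G x"
  have yc: "y \<in> carrier G" and e: "centralizer G y = centralizer G x" using y by (auto simp: beta_def)
  have "centralizer G x \<noteq> carrier G" using x by (simp add: center_iff)
  then have "y \<notin> center G" using e by (simp add: center_iff)
  then show "y \<in> carrier G - center G" using yc by blast
qed

lemma finite_beta: "finite (beta G x)"
  using fin beta_carrier finite_subset by blast

lemma finite_ZC: "finite (ZC x)"
  using fin ZC_carrier finite_subset by blast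

lemma finite_center: "finite (center G)"
  using fin center_sub finite_subset by blast

lemma finite_cent: "finite (centralizer G x)"
  using fin cent_sub finite_subset by blast

lemma card_center_pos: "card (center G) > 0"
  using finite_center center_one card_gt_0_iff by blast

lemma maxc_ZC_cent:
  assumes m: "maxc m" and a: "a \<in> ZC m - center G"
  shows "centralizer G a = centralizer G m"
proof -
  have ac: "a \<in> carrier G - center G" using a ZC_carrier by blast
  have "\<forall>y \<in> carrier G - center G. centralizer G m \<subseteq> centralizer G y \<longrightarrow> centralizer G y = centralizer G m"
    using m by (simp add: maxc_def)
  then show ?thesis using ac ZC_cent[of a m] a by blast
qed

lemma maxc_beta:
  assumes m: "maxc m"
  shows "beta G m = ZC m - center G"
proof
  have mc: "m \<in> carrier G" "m \<notin> center G" using m by (auto simp: maxc_def)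
  show "beta G m \<subseteq> ZC m - center G"
  proof
    fix y assume y: "y \<in> beta G m"
    then have yc: "y \<in> carrier G" and cy: "centralizer G y = centralizer G m"
      by (auto simp: beta_def)
    have "y \<notin> center G" using cy mc by (auto simp: center_iff)
    moreover have "y \<in> ZC m" using yc cy by (auto simp: ZC_def cent_iff)
    ultimately show "y \<in> ZC m - center G" by blast
  qed
  show "ZC m - center G \<subseteq> beta G m"
    using maxc_ZC_cent[OF m] ZC_carrier by (auto simp: beta_def)
qed

lemma maxc_card_beta:
  assumes m: "maxc m" and x: "x \<in> carrier G - center G"
  shows "card (beta G x) = card (ZC m) - card (center G)"
proof -
  have mc: "m \<in> carrier G - center G" using m by (auto simp: maxc_def)
  have "card (beta G x) = card (beta G m)" using reg[OF x mc] .
  also have "\<dots> = card (ZC m - center G)" using maxc_beta[OF m] by simp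
  also have "\<dots> = card (ZC m) - card (center G)"
    using card_Diff_subset[OF finite_center center_ZC] by simp
  finally show ?thesis .
qed

lemma maxc_card_less:
  assumes m: "maxc m"
  shows "card (center G) < card (ZC m)"
proof -
  have mc: "m \<in> carrier G" using m by (simp add: maxc_def)
  have "m \<in> ZC m" using mc by (auto simp: ZC_def cent_iff)
  moreover have "m \<notin> center G" using m by (auto simp: maxc_def)
  ultimately have "center G \<subset> ZC m" using center_ZC by blast
  then show ?thesis using finite_ZC psubset_card_mono by blast
qed

lemma finite_max_nat:
  fixes f :: "'c \<Rightarrow> nat"
  assumes "finite S" "x \<in> S"
  shows "\<exists>m \<in> S. \<forall>y \<in> S. f y \<le> f m"
proof -
  have ne: "f ` S \<noteq> {}" using assms by blast
  have fi: "finite (f ` S)" using assms by simp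
  obtain m where m: "m \<in> S" "f m = Max (f ` S)" using Max_in[OF fi ne] by auto
  have "\<forall>y \<in> S. f y \<le> f m" using Max_ge[OF fi] m(2) by simp
  then show ?thesis using m(1) by blast
qed

lemma exists_maxc:
  assumes x: "x \<in> carrier G - center G"
  shows "\<exists>m. maxc m \<and> centralizer G x \<subseteq> centralizer G m"
proof -
  define S where "S = {y \<in> carrier G - center G. centralizer G x \<subseteq> centralizer G y}"
  have "S \<subseteq> carrier G" by (auto simp: S_def)
  then have finS: "finite S" using fin finite_subset by blast
  have xS: "x \<in> S" using x by (auto simp: S_def)
  obtain m where mS: "m \<in> S" and mmax: "\<forall>y \<in> S. card (centralizer G y) \<le> card (centralizer G m)"
    using finite_max_nat[OF finS xS, of "\<lambda>y. card (centralizer G y)"] by blast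
  have "maxc m"
    unfolding maxc_def
  proof (intro conjI ballI impI)
    show "m \<in> carrier G - center G" using mS by (simp add: S_def)
    fix y assume y: "y \<in> carrier G - center G" and sub: "centralizer G m \<subseteq> centralizer G y"
    have "y \<in> S" using y sub mS by (auto simp: S_def)
    then have "card (centralizer G y) \<le> card (centralizer G m)" using mmax by blast
    then have "centralizer G m = centralizer G y"
      using card_subset_eq[OF finite_cent sub] card_mono[OF finite_cent sub] by linarith
    then show "centralizer G y = centralizer G m" by simp
  qed
  moreover have "centralizer G x \<subseteq> centralizer G m" using mS by (simp add: S_def)
  ultimately show ?thesis by blast
qed

lemma exists_noncentral: "\<exists>x. x \<in> carrier G - center G"
proof (rule ccontr)
  assume "\<nexists>x. x \<in> carrier G - center G"
  then have cz: "carrier G = center G" using center_sub by blast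
  have "centralizer G \<one> = carrier G" using center_one by (simp add: center_iff)
  moreover have "beta G \<one> \<subseteq> center G" using cz beta_carrier by blast
  ultimately have "centralizer G \<one> = beta G \<one> \<union> center G" using cz by blast
  then show False using hyp[of "\<one>"] by simp
qed

end

context group begin

lemma lcancel: "x \<in> carrier G \<Longrightarrow> a \<in> carrier G \<Longrightarrow> b \<in> carrier G \<Longrightarrow> x \<otimes> a = x \<otimes> b \<Longrightarrow> a = b"
  by (simp add: Units_eq)

lemma inv_a_a: "a \<in> carrier G \<Longrightarrow> y \<in> carrier G \<Longrightarrow> inv a \<otimes> (a \<otimes> y) = y"
  by (simp add: m_assoc[symmetric])

end

context ncg begin

lemma nonTI:
  assumes m: "maxc m"
  shows "\<exists>y \<in> centralizer G m - center G. \<not> centralizer G y \<subseteq> centralizer G m"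
proof (rule ccontr)
  assume H: "\<not> ?thesis"
  then have TI: "\<And>y. y \<in> centralizer G m \<Longrightarrow> y \<notin> center G \<Longrightarrow> centralizer G y \<subseteq> centralizer G m"
    by blast
  have mc: "m \<in> carrier G" "m \<notin> center G" using m by (auto simp: maxc_def)
  have "beta G m \<union> center G = ZC m" using maxc_beta[OF m] center_ZC by blast
  then have "centralizer G m \<noteq> ZC m" using hyp[OF mc(1)] by simp
  then obtain y where y: "y \<in> centralizer G m" "y \<notin> ZC m" using ZC_sub_cent[OF mc(1)] by blast
  define S where "S = centralizer G m - ZC m"
  have finS: "finite S" using finite_cent by (simp add: S_def)
  have yS: "y \<in> S" using y by (simp add: S_def)
  obtain y0 where y0S: "y0 \<in> S" and y0max: "\<forall>y\<in>S. card (centralizer G y) \<le> card (centralizer G y0)"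
    using finite_max_nat[OF finS yS, of "\<lambda>y. card (centralizer G y)"] by blast
  have y0: "y0 \<in> centralizer G m" "y0 \<notin> ZC m" using y0S by (auto simp: S_def)
  have y0c: "y0 \<in> carrier G" using y0 cent_sub by blast
  have y0nz: "y0 \<notin> center G" using y0 center_ZC by blast
  have Cy0: "centralizer G y0 \<subseteq> centralizer G m" using TI y0 y0nz by blast
  have sub: "(\<lambda>a. y0 \<otimes> a) ` ZC m \<subseteq> beta G y0"
  proof
    fix w assume "w \<in> (\<lambda>a. y0 \<otimes> a) ` ZC m"
    then obtain a where a: "a \<in> ZC m" and w: "w = y0 \<otimes> a" by blast
    have ac: "a \<in> carrier G" using a ZC_carrier by blast
    have wc: "w \<in> carrier G" using w y0c ac by simp
    have "a \<in> centralizer G m" using a ZC_sub_cent[OF mc(1)] by blast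
    then have wm: "w \<in> centralizer G m" using w cent_mult_closed[OF y0(1) _ mc(1)] by blast
    have wZ: "w \<notin> ZC m"
    proof
      assume "w \<in> ZC m"
      then have "w \<otimes> inv a \<in> ZC m" using ZC_mult ZC_inv a by blast
      moreover have "w \<otimes> inv a = y0" using w y0c ac by (simp add: m_assoc)
      ultimately show False using y0 by simp
    qed
    have wS: "w \<in> S" using wm wZ by (simp add: S_def)
    have sub1: "centralizer G y0 \<subseteq> centralizer G w"
    proof -
      have "centralizer G y0 \<subseteq> centralizer G a" using Cy0 ZC_cent[OF a] by blast
      then show ?thesis using cent_int[OF y0c ac] w by blast
    qed
    have "card (centralizer G w) \<le> card (centralizer G y0)" using y0max wS by blast
    then have "centralizer G y0 = centralizer G w"
      using card_subset_eq[OF finite_cent sub1] card_mono[OF finite_cent sub1] by linarith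
    then show "w \<in> beta G y0" using wc by (simp add: beta_def)
  qed
  have inj: "inj_on (\<lambda>a. y0 \<otimes> a) (ZC m)"
  proof (rule inj_onI)
    fix a b assume "a \<in> ZC m" "b \<in> ZC m" "y0 \<otimes> a = y0 \<otimes> b"
    then show "a = b" using lcancel[of y0 a b] y0c ZC_carrier by blast
  qed
  have "card (ZC m) \<le> card (beta G y0)" using card_inj_on_le[OF inj sub finite_beta] .
  also have "card (beta G y0) = card (ZC m) - card (center G)"
    using maxc_card_beta[OF m] y0c y0nz by blast
  finally show False using card_center_pos maxc_card_less[OF m] by linarith
qed

lemma lem1_aux:
  fixes n :: nat
  assumes m: "maxc m" and y: "y \<in> centralizer G m" and n: "y [^] n \<in> center G"
    and a: "a \<in> ZC m" and an: "a [^] n \<notin> center G"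
  shows "centralizer G (a \<otimes> y) = centralizer G m \<inter> centralizer G y"
proof -
  have mc: "m \<in> carrier G" using m by (simp add: maxc_def)
  have ac: "a \<in> carrier G" using a ZC_carrier by blast
  have yc: "y \<in> carrier G" using y cent_sub by blast
  have comm: "a \<otimes> y = y \<otimes> a" using a y by (simp add: ZC_def)
  have pw: "(a \<otimes> y) [^] n = a [^] n \<otimes> y [^] n" using pow_mult_distrib[OF comm ac yc] .
  have Ca: "centralizer G (a [^] n) = centralizer G m"
    using maxc_ZC_cent[OF m] ZC_pow[OF a] an by blast
  have "centralizer G ((a \<otimes> y) [^] n) = centralizer G (a [^] n)"
    using pw cent_mult_center[of "a [^] n" "y [^] n"] n ac by simp
  then have s1: "centralizer G (a \<otimes> y) \<subseteq> centralizer G m"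
    using cent_pow[of "a \<otimes> y" n] ac yc Ca by simp
  have s2: "centralizer G (a \<otimes> y) \<subseteq> centralizer G y"
  proof
    fix u assume u: "u \<in> centralizer G (a \<otimes> y)"
    have "u \<in> centralizer G a" using u s1 ZC_cent[OF a] by blast
    then have "u \<in> centralizer G (inv a)" using cent_inv[OF ac] by simp
    then have "u \<in> centralizer G (inv a \<otimes> (a \<otimes> y))" using cent_int[of "inv a" "a \<otimes> y"] ac yc u by blast
    then show "u \<in> centralizer G y" using inv_a_a[OF ac yc] by simp
  qed
  have s3: "centralizer G m \<inter> centralizer G y \<subseteq> centralizer G (a \<otimes> y)"
    using ZC_cent[OF a] cent_int[OF ac yc] by blast
  show ?thesis using s1 s2 s3 by blast
qed

lemma lem1:
  fixes n :: nat
  assumes m: "maxc m" and y: "y \<in> centralizer G m" "y \<notin> center G"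
    and ny: "\<not> centralizer G y \<subseteq> centralizer G m" and n: "y [^] n \<in> center G"
  shows "\<forall>a \<in> ZC m. a [^] n \<in> center G"
proof (rule ccontr)
  assume "\<not> ?thesis"
  then obtain a0 where a0: "a0 \<in> ZC m" "a0 [^] n \<notin> center G" by blast
  have mc: "m \<in> carrier G" using m by (simp add: maxc_def)
  have yc: "y \<in> carrier G" using y cent_sub by blast
  have a0c: "a0 \<in> carrier G" using a0 ZC_carrier by blast
  define Bad where "Bad = {a \<in> ZC m. a [^] n \<notin> center G}"
  define Good where "Good = {a \<in> ZC m. a [^] n \<in> center G}"
  have finB: "finite Bad" using finite_ZC by (simp add: Bad_def)
  have finGd: "finite Good" using finite_ZC by (simp add: Good_def)
  have yi1: "inv y \<in> centralizer G m" using cent_inv_closed[OF y(1) mc] .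
  have yi2: "inv y [^] n \<in> center G" using nat_pow_inv[OF yc, of n] center_inv[OF n] by simp
  have yi3: "centralizer G (inv y) = centralizer G y" using cent_inv[OF yc] .
  define I where "I = centralizer G m \<inter> centralizer G y"
  have B1: "\<And>a. a \<in> Bad \<Longrightarrow> centralizer G (a \<otimes> y) = I"
    using lem1_aux[OF m y(1) n] by (simp add: Bad_def I_def)
  have B2: "\<And>a. a \<in> Bad \<Longrightarrow> centralizer G (a \<otimes> inv y) = I"
    using lem1_aux[OF m yi1 yi2] yi3 by (simp add: Bad_def I_def)
  have a0B: "a0 \<in> Bad" using a0 by (simp add: Bad_def)
  have Inc: "I \<noteq> carrier G"
  proof
    assume "I = carrier G"
    then have "centralizer G m = carrier G" using cent_sub[of m] by (auto simp: I_def)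
    then show False using ny cent_sub[of y] by blast
  qed
  have w0: "a0 \<otimes> y \<in> carrier G - center G"
    using B1[OF a0B] Inc a0c yc by (simp add: center_iff)
  have sub1: "(\<lambda>a. a \<otimes> y) ` Bad \<subseteq> beta G (a0 \<otimes> y)"
  proof
    fix w assume "w \<in> (\<lambda>a. a \<otimes> y) ` Bad"
    then obtain a where a: "a \<in> Bad" "w = a \<otimes> y" by blast
    have "a \<in> carrier G" using a ZC_carrier by (auto simp: Bad_def)
    then show "w \<in> beta G (a0 \<otimes> y)" using a B1[OF a(1)] B1[OF a0B] yc by (simp add: beta_def)
  qed
  have sub2: "(\<lambda>a. a \<otimes> inv y) ` Bad \<subseteq> beta G (a0 \<otimes> y)"
  proof
    fix w assume "w \<in> (\<lambda>a. a \<otimes> inv y) ` Bad"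
    then obtain a where a: "a \<in> Bad" "w = a \<otimes> inv y" by blast
    have "a \<in> carrier G" using a ZC_carrier by (auto simp: Bad_def)
    then show "w \<in> beta G (a0 \<otimes> y)" using a B2[OF a(1)] B1[OF a0B] yc by (simp add: beta_def)
  qed
  have disj: "(\<lambda>a. a \<otimes> y) ` Bad \<inter> (\<lambda>a. a \<otimes> inv y) ` Bad = {}"
  proof (rule ccontr)
    assume "(\<lambda>a. a \<otimes> y) ` Bad \<inter> (\<lambda>a. a \<otimes> inv y) ` Bad \<noteq> {}"
    then obtain a b where ab: "a \<in> Bad" "b \<in> Bad" "a \<otimes> y = b \<otimes> inv y" by blast
    have ac: "a \<in> ZC m" "a \<in> carrier G" and bc: "b \<in> ZC m" "b \<in> carrier G"
      using ab ZC_carrier by (auto simp: Bad_def)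
    have "y \<otimes> y = (inv a \<otimes> (a \<otimes> y)) \<otimes> y" using inv_a_a[OF ac(2) yc] by simp
    also have "\<dots> = (inv a \<otimes> (b \<otimes> inv y)) \<otimes> y" using ab(3) by simp
    also have "\<dots> = inv a \<otimes> b" using ac bc yc by (simp add: m_assoc)
    finally have yy: "y \<otimes> y \<in> ZC m" using ZC_mult[OF ZC_inv[OF ac(1)] bc(1)] by simp
    show False
    proof (cases "y \<otimes> y \<in> center G")
      case True
      then show False using odd_sq_center[OF fin oddG yc] y(2) by blast
    next
      case False
      then have "centralizer G (y \<otimes> y) = centralizer G m" using maxc_ZC_cent[OF m] yy by blast
      moreover have "centralizer G y \<subseteq> centralizer G (y \<otimes> y)" using cent_int[OF yc yc] by blast
      ultimately show False using ny by blast
    qed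
  qed
  have inj1: "inj_on (\<lambda>a. a \<otimes> y) Bad"
  proof (rule inj_onI)
    fix a b assume "a \<in> Bad" "b \<in> Bad" "a \<otimes> y = b \<otimes> y"
    then show "a = b" using right_cancel[of y a b] yc ZC_carrier by (auto simp: Bad_def)
  qed
  have inj2: "inj_on (\<lambda>a. a \<otimes> inv y) Bad"
  proof (rule inj_onI)
    fix a b assume "a \<in> Bad" "b \<in> Bad" "a \<otimes> inv y = b \<otimes> inv y"
    then show "a = b" using right_cancel[of "inv y" a b] yc ZC_carrier by (auto simp: Bad_def)
  qed
  have "card ((\<lambda>a. a \<otimes> y) ` Bad \<union> (\<lambda>a. a \<otimes> inv y) ` Bad)
        = card ((\<lambda>a. a \<otimes> y) ` Bad) + card ((\<lambda>a. a \<otimes> inv y) ` Bad)"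
    using card_Un_disjoint[OF finite_imageI[OF finB] finite_imageI[OF finB] disj] .
  also have "\<dots> = card Bad + card Bad" using card_image[OF inj1] card_image[OF inj2] by simp
  finally have c1: "card Bad + card Bad \<le> card (beta G (a0 \<otimes> y))"
    using card_mono[OF finite_beta, of "(\<lambda>a. a \<otimes> y) ` Bad \<union> (\<lambda>a. a \<otimes> inv y) ` Bad"] sub1 sub2
    by (metis Un_subset_iff)
  have c2: "card (beta G (a0 \<otimes> y)) = card (ZC m) - card (center G)"
    using maxc_card_beta[OF m w0] .
  have c3: "card (ZC m) = card Good + card Bad"
  proof -
    have "ZC m = Good \<union> Bad" "Good \<inter> Bad = {}" by (auto simp: Good_def Bad_def)
    then show ?thesis using card_Un_disjoint[OF finGd finB] by simp
  qed
  have c4: "card (center G) \<le> card Good"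
  proof -
    have "center G \<subseteq> Good" using center_ZC center_pow by (auto simp: Good_def)
    then show ?thesis using card_mono[OF finGd] by blast
  qed
  have c5: "card Good \<le> card Bad"
  proof -
    have sub: "(\<lambda>g. a0 \<otimes> g) ` Good \<subseteq> Bad"
    proof
      fix w assume "w \<in> (\<lambda>g. a0 \<otimes> g) ` Good"
      then obtain g where g: "g \<in> Good" "w = a0 \<otimes> g" by blast
      have gz: "g \<in> ZC m" "g [^] n \<in> center G" using g by (auto simp: Good_def)
      have gc: "g \<in> carrier G" using gz ZC_carrier by blast
      have wz: "w \<in> ZC m" using ZC_mult[OF a0(1) gz(1)] g by simp
      have comm: "a0 \<otimes> g = g \<otimes> a0" using ZC_comm[OF mc a0(1) gz(1)] .
      have "w [^] n = a0 [^] n \<otimes> g [^] n" using pow_mult_distrib[OF comm a0c gc] g by simp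
      have "w [^] n \<notin> center G"
      proof
        assume wn: "w [^] n \<in> center G"
        have "a0 [^] n = (a0 [^] n \<otimes> g [^] n) \<otimes> inv (g [^] n)" using a0c gc by (simp add: m_assoc)
        also have "\<dots> = w [^] n \<otimes> inv (g [^] n)" using \<open>w [^] n = a0 [^] n \<otimes> g [^] n\<close> by simp
        finally have "a0 [^] n \<in> center G" using center_mult[OF wn center_inv[OF gz(2)]] by simp
        then show False using a0 by simp
      qed
      then show "w \<in> Bad" using wz by (simp add: Bad_def)
    qed
    have inj: "inj_on (\<lambda>g. a0 \<otimes> g) Good"
    proof (rule inj_onI)
      fix a b assume "a \<in> Good" "b \<in> Good" "a0 \<otimes> a = a0 \<otimes> b"
      then show "a = b" using lcancel[of a0 a b] a0c ZC_carrier by (auto simp: Good_def)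
    qed
    show ?thesis using card_inj_on_le[OF inj sub finB] .
  qed
  show False using c1 c2 c3 c4 c5 card_center_pos by linarith
qed

end

context ncg begin

lemma maxc_prime:
  assumes m: "maxc m"
  shows "\<exists>p::nat. Factorial_Ring.prime p \<and> (\<forall>a \<in> ZC m. a [^] p \<in> center G)"
proof -
  obtain y where y: "y \<in> centralizer G m" "y \<notin> center G" "\<not> centralizer G y \<subseteq> centralizer G m"
    using nonTI[OF m] by blast
  have mc: "m \<in> carrier G" using m by (simp add: maxc_def)
  have yc: "y \<in> carrier G" using y cent_sub by blast
  have ex: "\<exists>n::nat. n > 0 \<and> y [^] n \<in> center G"
    using ord_ge_1[OF fin yc] pow_ord_eq_1[OF yc] center_one by (intro exI[of _ "ord y"]) simp
  define n where "n = (LEAST n::nat. n > 0 \<and> y [^] n \<in> center G)"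
  have n: "n > 0" "y [^] n \<in> center G" using LeastI_ex[OF ex] unfolding n_def by auto
  have nmin: "\<And>k. 0 < k \<Longrightarrow> k < n \<Longrightarrow> y [^] k \<notin> center G"
    using not_less_Least unfolding n_def by blast
  have "n \<noteq> 1" using n y(2) yc by auto
  then obtain q where q: "Factorial_Ring.prime q" "q dvd n" using prime_factor_nat by blast
  have q1: "q > 1" using q(1) prime_gt_1_nat by blast
  have qn: "n div q * q = n" using q(2) by simp
  have d1: "n div q > 0" using q(2) n(1) q1
    by (metis dvd_div_eq_0_iff gr0I not_gr0)
  have d2: "n div q < n" using n(1) q1 by simp
  define y' where "y' = y [^] (n div q)"
  have y'nz: "y' \<notin> center G" using nmin[OF d1 d2] by (simp add: y'_def)
  have y'q: "y' [^] q \<in> center G" using n(2) qn yc by (simp add: y'_def nat_pow_pow)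
  have y'm: "y' \<in> centralizer G m" using cent_pow_closed[OF y(1) mc] by (simp add: y'_def)
  have "centralizer G y \<subseteq> centralizer G y'" using cent_pow[OF yc] by (simp add: y'_def)
  then have y'n: "\<not> centralizer G y' \<subseteq> centralizer G m" using y(3) by blast
  show ?thesis using lem1[OF m y'm y'nz y'n y'q] q(1) by blast
qed

lemma inv_as_pow: "x \<in> carrier G \<Longrightarrow> inv x = x [^] (ord x - 1)"
proof -
  assume x: "x \<in> carrier G"
  have o: "ord x \<ge> 1" using ord_ge_1[OF fin x] .
  have "x [^] (ord x - 1) \<otimes> x = x [^] (ord x - 1 + 1)" using x by (simp add: nat_pow_mult[symmetric])
  also have "\<dots> = \<one>" using o x by simp
  finally show ?thesis using inv_equality[of "x [^] (ord x - 1)" x] x by simp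
qed

lemma closed_pow:
  assumes "\<one> \<in> H" "\<And>a b. a \<in> H \<Longrightarrow> b \<in> H \<Longrightarrow> a \<otimes> b \<in> H" "a \<in> H"
  shows "a [^] (k::nat) \<in> H"
  using assms by (induct k) auto

lemma ppow_card:
  assumes p: "Factorial_Ring.prime p" and A: "A \<subseteq> carrier G"
    and Amul: "\<And>a b. a \<in> A \<Longrightarrow> b \<in> A \<Longrightarrow> a \<otimes> b \<in> A"
    and Acomm: "\<And>a b. a \<in> A \<Longrightarrow> b \<in> A \<Longrightarrow> a \<otimes> b = b \<otimes> a"
  shows "H \<subseteq> A \<Longrightarrow> \<one> \<in> H \<Longrightarrow> (\<And>a b. a \<in> H \<Longrightarrow> b \<in> H \<Longrightarrow> a \<otimes> b \<in> H)
    \<Longrightarrow> (\<And>a. a \<in> A \<Longrightarrow> a [^] p \<in> H) \<Longrightarrow> \<exists>s. card A = p ^ s * card H"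
proof (induct "card A - card H" arbitrary: H rule: less_induct)
  case less
  have finA: "finite A" using A fin finite_subset by blast
  have HA: "H \<subseteq> A" and H1: "\<one> \<in> H" and Hmul: "\<And>a b. a \<in> H \<Longrightarrow> b \<in> H \<Longrightarrow> a \<otimes> b \<in> H"
    and Hp: "\<And>a. a \<in> A \<Longrightarrow> a [^] p \<in> H" using less.prems by auto
  have finH: "finite H" using HA finA finite_subset by blast
  have Hc: "\<And>h. h \<in> H \<Longrightarrow> h \<in> carrier G" using HA A by blast
  have Hinv: "\<And>h. h \<in> H \<Longrightarrow> inv h \<in> H"
    using inv_as_pow Hc closed_pow[OF H1 Hmul] by simp
  have A1: "\<one> \<in> A" using H1 HA by blast
  have Apow: "\<And>a k. a \<in> A \<Longrightarrow> a [^] (k::nat) \<in> A" using closed_pow[OF A1 Amul] by blast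
  have p1: "p > 1" using p prime_gt_1_nat by blast
  show ?case
  proof (cases "H = A")
    case True
    then show ?thesis by (intro exI[of _ 0]) simp
  next
    case False
    then obtain a where a: "a \<in> A" "a \<notin> H" using HA by blast
    have ac: "a \<in> carrier G" using a A by blast
    have apH: "a [^] p \<in> H" using Hp[OF a(1)] .
    have key: "\<And>d. 0 < d \<Longrightarrow> d < p \<Longrightarrow> a [^] d \<notin> H"
    proof
      fix d :: nat assume d: "0 < d" "d < p" and adH: "a [^] d \<in> H"
      have "\<not> p dvd d" using d by (simp add: nat_dvd_not_less)
      then have cop: "coprime p d" using prime_imp_coprime[OF p] by blast
      then have g1: "gcd d p = 1" by (simp add: coprime_iff_gcd_eq_1 gcd.commute)
      obtain u v where uv: "d * u = p * v + gcd d p" using bezout_nat[of d p] d by blast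
      then have uv': "d * u = p * v + 1" using g1 by simp
      have "a [^] (d * u) = (a [^] d) [^] u" using ac by (simp add: nat_pow_pow)
      then have X: "a [^] (d * u) \<in> H" using closed_pow[OF H1 Hmul adH] by simp
      have "a [^] (d * u) = a [^] (p * v) \<otimes> a [^] (1::nat)" using uv' ac by (simp add: nat_pow_mult)
      also have "\<dots> = (a [^] p) [^] v \<otimes> a" using ac by (simp add: nat_pow_pow)
      finally have eq: "a [^] (d * u) = (a [^] p) [^] v \<otimes> a" .
      have Y: "(a [^] p) [^] v \<in> H" using closed_pow[OF H1 Hmul apH] .
      have "a = inv ((a [^] p) [^] v) \<otimes> a [^] (d * u)"
        using eq ac inv_solve_left[of a "(a [^] p) [^] v" "a [^] (d * u)"] by simp
      then have "a \<in> H" using Hmul[OF Hinv[OF Y] X] by simp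
      then show False using a(2) by simp
    qed
    define f where "f = (\<lambda>(h, i). h \<otimes> a [^] (i::nat))"
    define H' where "H' = f ` (H \<times> {..<p})"
    have neq: "\<And>h h' i j. h \<in> H \<Longrightarrow> h' \<in> H \<Longrightarrow> i < j \<Longrightarrow> j < p \<Longrightarrow> h \<otimes> a [^] i \<noteq> h' \<otimes> a [^] j"
    proof
      fix h h' i j assume hh: "h \<in> H" "h' \<in> H" and ij: "i < j" "j < p" and e: "h \<otimes> a [^] i = h' \<otimes> a [^] (j::nat)"
      have hc: "h \<in> carrier G" "h' \<in> carrier G" using hh Hc by auto
      have "h' \<otimes> a [^] j = (h' \<otimes> a [^] (j - i)) \<otimes> a [^] i"
        using ij ac hc by (simp add: m_assoc nat_pow_mult)
      then have "h = h' \<otimes> a [^] (j - i)" using e right_cancel[of "a [^] i" h "h' \<otimes> a [^] (j - i)"] ac hc by simp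
      then have "a [^] (j - i) = inv h' \<otimes> h" using inv_solve_left[of "a [^] (j - i)" h' h] hc ac by simp
      then have "a [^] (j - i) \<in> H" using Hmul[OF Hinv[OF hh(2)] hh(1)] by simp
      then show False using key[of "j - i"] ij by simp
    qed
    have injf: "inj_on f (H \<times> {..<p})"
    proof (rule inj_onI)
      fix x y assume x: "x \<in> H \<times> {..<p}" and y: "y \<in> H \<times> {..<p}" and e: "f x = f y"
      obtain h i where hi: "x = (h, i)" by (cases x)
      obtain h' j where hj: "y = (h', j)" by (cases y)
      have hh: "h \<in> H" "h' \<in> H" "i < p" "j < p" using x y hi hj by auto
      have e': "h \<otimes> a [^] i = h' \<otimes> a [^] j" using e hi hj by (simp add: f_def)
      have "i = j"
      proof (rule ccontr)
        assume "i \<noteq> j"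
        then have "i < j \<or> j < i" by arith
        then show False using neq[of h h' i j] neq[of h' h j i] hh e' by auto
      qed
      then have "h = h'" using e' right_cancel[of "a [^] i" h h'] hh Hc ac by simp
      then show "x = y" using hi hj \<open>i = j\<close> by simp
    qed
    have cardH': "card H' = p * card H"
      using card_image[OF injf] finH by (simp add: H'_def card_cartesian_product)
    have HH': "H \<subseteq> H'"
    proof
      fix h assume "h \<in> H"
      then have "h = f (h, 0)" "(h, 0) \<in> H \<times> {..<p}" using Hc p1 by (auto simp: f_def)
      then show "h \<in> H'" unfolding H'_def by blast
    qed
    have aH': "a \<in> H'"
    proof -
      have "a = f (\<one>, 1)" "(\<one>, 1) \<in> H \<times> {..<p}" using ac H1 p1 by (auto simp: f_def)
      then show ?thesis unfolding H'_def by blast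
    qed
    have H'A: "H' \<subseteq> A"
    proof
      fix x assume "x \<in> H'"
      then obtain h i where "x = h \<otimes> a [^] (i::nat)" "h \<in> H" unfolding H'_def f_def by auto
      then show "x \<in> A" using Amul HA Apow[OF a(1)] by blast
    qed
    have H'1: "\<one> \<in> H'" using HH' H1 by blast
    have H'mul: "\<And>x y. x \<in> H' \<Longrightarrow> y \<in> H' \<Longrightarrow> x \<otimes> y \<in> H'"
    proof -
      fix x y assume "x \<in> H'" "y \<in> H'"
      then obtain h i h' j where x: "x = h \<otimes> a [^] i" "h \<in> H" "i < p"
        and y: "y = h' \<otimes> a [^] j" "h' \<in> H" "j < p" unfolding H'_def f_def by auto
      have hc: "h \<in> carrier G" "h' \<in> carrier G" using x y Hc by auto
      have hA: "h' \<in> A" using y HA by blast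
      have cm: "a [^] i \<otimes> h' = h' \<otimes> a [^] i" using Acomm[OF Apow[OF a(1)] hA] .
      have "x \<otimes> y = h \<otimes> (a [^] i \<otimes> h') \<otimes> a [^] j" using x y hc ac by (simp add: m_assoc)
      also have "\<dots> = (h \<otimes> h') \<otimes> a [^] (i + j)" using cm hc ac by (simp add: m_assoc nat_pow_mult)
      finally have xy: "x \<otimes> y = (h \<otimes> h') \<otimes> a [^] (i + j)" .
      have hh: "h \<otimes> h' \<in> H" using Hmul x y by blast
      show "x \<otimes> y \<in> H'"
      proof (cases "i + j < p")
        case True
        then have "x \<otimes> y = f (h \<otimes> h', i + j)" "(h \<otimes> h', i + j) \<in> H \<times> {..<p}" using xy hh by (auto simp: f_def)
        then show ?thesis unfolding H'_def by blast
      next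
        case False
        then have "a [^] (i + j) = a [^] p \<otimes> a [^] (i + j - p)" using ac by (simp add: nat_pow_mult)
        then have "x \<otimes> y = (h \<otimes> h' \<otimes> a [^] p) \<otimes> a [^] (i + j - p)" using xy hc ac by (simp add: m_assoc)
        moreover have "h \<otimes> h' \<otimes> a [^] p \<in> H" using Hmul[OF hh apH] .
        moreover have "i + j - p < p" using x(3) y(3) by simp
        ultimately have "x \<otimes> y = f (h \<otimes> h' \<otimes> a [^] p, i + j - p)" "(h \<otimes> h' \<otimes> a [^] p, i + j - p) \<in> H \<times> {..<p}"
          by (auto simp: f_def)
        then show ?thesis unfolding H'_def by blast
      qed
    qed
    have H'p: "\<And>x. x \<in> A \<Longrightarrow> x [^] p \<in> H'" using Hp HH' by blast
    have lt: "card A - card H' < card A - card H"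
    proof -
      have "card H < card H'" using cardH' p1 finH H1 by (metis card_gt_0_iff empty_iff mult_less_cancel2 nat_mult_1)
      moreover have "card H' \<le> card A" using card_mono[OF finA H'A] .
      ultimately show ?thesis by linarith
    qed
    obtain s where s: "card A = p ^ s * card H'" using less.hyps[OF lt H'A H'1 H'mul H'p] by blast
    then have "card A = p ^ Suc s * card H" using cardH' by simp
    then show ?thesis by blast
  qed
qed

end

context ncg begin

lemma ZC_card_pow:
  assumes m: "maxc m" and p: "Factorial_Ring.prime p" and ap: "\<forall>a \<in> ZC m. a [^] p \<in> center G"
  shows "\<exists>s. card (ZC m) = p ^ s * card (center G)"
proof -
  have mc: "m \<in> carrier G" using m by (simp add: maxc_def)
  have "\<And>a. a \<in> ZC m \<Longrightarrow> a [^] p \<in> center G" using ap by blast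
  note r = ppow_card[of p "ZC m" "center G"]
  show ?thesis
  proof (rule r)
    show "Factorial_Ring.prime p" using p .
    show "ZC m \<subseteq> carrier G" using ZC_carrier .
    show "\<And>a b. a \<in> ZC m \<Longrightarrow> b \<in> ZC m \<Longrightarrow> a \<otimes> b \<in> ZC m" using ZC_mult .
    show "\<And>a b. a \<in> ZC m \<Longrightarrow> b \<in> ZC m \<Longrightarrow> a \<otimes> b = b \<otimes> a" using ZC_comm[OF mc] .
    show "center G \<subseteq> ZC m" using center_ZC .
    show "\<one> \<in> center G" using center_one .
    show "\<And>a b. a \<in> center G \<Longrightarrow> b \<in> center G \<Longrightarrow> a \<otimes> b \<in> center G" using center_mult .
    show "\<And>a. a \<in> ZC m \<Longrightarrow> a [^] p \<in> center G" using ap by blast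
  qed
qed

lemma prime_unique:
  fixes p1 p2 :: nat
  assumes m1: "maxc m1" and m2: "maxc m2"
    and p1: "Factorial_Ring.prime p1" and p2: "Factorial_Ring.prime p2"
    and a1: "\<forall>a \<in> ZC m1. a [^] p1 \<in> center G" and a2: "\<forall>a \<in> ZC m2. a [^] p2 \<in> center G"
  shows "p1 = p2"
proof -
  have m2c: "m2 \<in> carrier G - center G" using m2 by (simp add: maxc_def)
  have e1: "card (beta G m2) = card (ZC m1) - card (center G)" using maxc_card_beta[OF m1 m2c] .
  have e2: "card (beta G m2) = card (ZC m2) - card (center G)" using maxc_card_beta[OF m2 m2c] .
  have eq: "card (ZC m1) = card (ZC m2)" using e1 e2 maxc_card_less[OF m1] maxc_card_less[OF m2] by linarith
  obtain s1 where s1: "card (ZC m1) = p1 ^ s1 * card (center G)" using ZC_card_pow[OF m1 p1 a1] by blast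
  obtain s2 where s2: "card (ZC m2) = p2 ^ s2 * card (center G)" using ZC_card_pow[OF m2 p2 a2] by blast
  have pp: "p1 ^ s1 = p2 ^ s2" using s1 s2 eq card_center_pos by simp
  have "s1 \<noteq> 0" using s1 maxc_card_less[OF m1] by (cases s1) auto
  then have "p1 dvd p1 ^ s1" by simp
  then have "p1 dvd p2 ^ s2" using pp by simp
  then have "p1 dvd p2" using prime_dvd_power[OF p1] by blast
  then show ?thesis using primes_dvd_imp_eq[OF p1 p2] by blast
qed

lemma main_aux:
  fixes p :: nat
  assumes m: "maxc m" and g: "g \<in> carrier G" and gm: "centralizer G (g [^] p) \<subseteq> centralizer G m"
    and a: "a \<in> ZC m" and ap: "a [^] p \<in> center G"
  shows "centralizer G (a \<otimes> g) = centralizer G g"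
proof -
  have ac: "a \<in> carrier G" using a ZC_carrier by blast
  have Cg: "centralizer G g \<subseteq> centralizer G m" using cent_pow[OF g, of p] gm by blast
  have gm': "g \<in> centralizer G m" using Cg cent_self[OF g] by blast
  have comm: "a \<otimes> g = g \<otimes> a" using a gm' by (simp add: ZC_def)
  have cc: "a [^] p \<otimes> g [^] p = g [^] p \<otimes> a [^] p" using center_comm[OF ap] g by simp
  have pw: "(a \<otimes> g) [^] p = g [^] p \<otimes> a [^] p"
    using pow_mult_distrib[OF comm ac g] cc by simp
  have "centralizer G ((a \<otimes> g) [^] p) = centralizer G (g [^] p)"
    using pw cent_mult_center[of "g [^] p" "a [^] p"] ap g by simp
  then have s1: "centralizer G (a \<otimes> g) \<subseteq> centralizer G m"
    using cent_pow[of "a \<otimes> g" p] ac g gm by simp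
  have s2: "centralizer G (a \<otimes> g) \<subseteq> centralizer G g"
  proof
    fix u assume u: "u \<in> centralizer G (a \<otimes> g)"
    have "u \<in> centralizer G a" using u s1 ZC_cent[OF a] by blast
    then have "u \<in> centralizer G (inv a)" using cent_inv[OF ac] by simp
    then have "u \<in> centralizer G (inv a \<otimes> (a \<otimes> g))" using cent_int[of "inv a" "a \<otimes> g"] ac g u by blast
    then show "u \<in> centralizer G g" using inv_a_a[OF ac g] by simp
  qed
  have s3: "centralizer G g \<subseteq> centralizer G (a \<otimes> g)"
    using Cg ZC_cent[OF a] cent_int[OF ac g] by blast
  show ?thesis using s2 s3 by blast
qed

lemma main_pow:
  fixes p :: nat
  assumes allp: "\<And>m. maxc m \<Longrightarrow> \<forall>a \<in> ZC m. a [^] p \<in> center G"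
    and g: "g \<in> carrier G - center G"
  shows "g [^] p \<in> center G"
proof (rule ccontr)
  assume h: "g [^] p \<notin> center G"
  have gc: "g \<in> carrier G" using g by blast
  have hc: "g [^] p \<in> carrier G - center G" using h gc by simp
  obtain m where m: "maxc m" "centralizer G (g [^] p) \<subseteq> centralizer G m" using exists_maxc[OF hc] by blast
  have Ap: "\<forall>a \<in> ZC m. a [^] p \<in> center G" using allp[OF m(1)] .
  have igc: "inv g \<in> carrier G" using gc by simp
  have igp: "centralizer G (inv g [^] p) \<subseteq> centralizer G m"
    using m(2) nat_pow_inv[OF gc, of p] cent_inv[of "g [^] p"] gc by simp
  have sub1: "(\<lambda>a. a \<otimes> g) ` ZC m \<subseteq> beta G g"
  proof
    fix w assume "w \<in> (\<lambda>a. a \<otimes> g) ` ZC m"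
    then obtain a where a: "a \<in> ZC m" "w = a \<otimes> g" by blast
    have "a \<in> carrier G" using a ZC_carrier by blast
    then show "w \<in> beta G g" using a main_aux[OF m(1) gc m(2) a(1)] Ap gc by (simp add: beta_def)
  qed
  have sub2: "(\<lambda>a. a \<otimes> inv g) ` ZC m \<subseteq> beta G g"
  proof
    fix w assume "w \<in> (\<lambda>a. a \<otimes> inv g) ` ZC m"
    then obtain a where a: "a \<in> ZC m" "w = a \<otimes> inv g" by blast
    have "a \<in> carrier G" using a ZC_carrier by blast
    then show "w \<in> beta G g" using a main_aux[OF m(1) igc igp a(1)] Ap gc cent_inv[OF gc] by (simp add: beta_def)
  qed
  have disj: "(\<lambda>a. a \<otimes> g) ` ZC m \<inter> (\<lambda>a. a \<otimes> inv g) ` ZC m = {}"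
  proof (rule ccontr)
    assume "(\<lambda>a. a \<otimes> g) ` ZC m \<inter> (\<lambda>a. a \<otimes> inv g) ` ZC m \<noteq> {}"
    then obtain a b where ab: "a \<in> ZC m" "b \<in> ZC m" "a \<otimes> g = b \<otimes> inv g" by blast
    have ac: "a \<in> carrier G" and bc: "b \<in> carrier G" using ab ZC_carrier by auto
    have "g \<otimes> g = (inv a \<otimes> (a \<otimes> g)) \<otimes> g" using inv_a_a[OF ac gc] by simp
    also have "\<dots> = (inv a \<otimes> (b \<otimes> inv g)) \<otimes> g" using ab(3) by simp
    also have "\<dots> = inv a \<otimes> b" using ac bc gc by (simp add: m_assoc)
    finally have gg: "g \<otimes> g \<in> ZC m" using ZC_mult[OF ZC_inv[OF ab(1)] ab(2)] by simp
    have "(g \<otimes> g) [^] p = g [^] p \<otimes> g [^] p" using pow_mult_distrib[of g g p] gc by simp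
    moreover have "(g \<otimes> g) [^] p \<in> center G" using Ap gg by blast
    ultimately have "g [^] p \<otimes> g [^] p \<in> center G" by simp
    then have "g [^] p \<in> center G" using odd_sq_center[OF fin oddG nat_pow_closed[OF gc]] by blast
    then show False using h by simp
  qed
  have inj1: "inj_on (\<lambda>a. a \<otimes> g) (ZC m)"
  proof (rule inj_onI)
    fix a b assume "a \<in> ZC m" "b \<in> ZC m" "a \<otimes> g = b \<otimes> g"
    then show "a = b" using right_cancel[of g a b] gc ZC_carrier by blast
  qed
  have inj2: "inj_on (\<lambda>a. a \<otimes> inv g) (ZC m)"
  proof (rule inj_onI)
    fix a b assume "a \<in> ZC m" "b \<in> ZC m" "a \<otimes> inv g = b \<otimes> inv g"
    then show "a = b" using right_cancel[of "inv g" a b] gc ZC_carrier by blast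
  qed
  have "card ((\<lambda>a. a \<otimes> g) ` ZC m \<union> (\<lambda>a. a \<otimes> inv g) ` ZC m)
        = card ((\<lambda>a. a \<otimes> g) ` ZC m) + card ((\<lambda>a. a \<otimes> inv g) ` ZC m)"
    using card_Un_disjoint[OF finite_imageI[OF finite_ZC] finite_imageI[OF finite_ZC] disj] .
  also have "\<dots> = card (ZC m) + card (ZC m)" using card_image[OF inj1] card_image[OF inj2] by simp
  finally have c1: "card (ZC m) + card (ZC m) \<le> card (beta G g)"
    using card_mono[OF finite_beta, of "(\<lambda>a. a \<otimes> g) ` ZC m \<union> (\<lambda>a. a \<otimes> inv g) ` ZC m"] sub1 sub2
    by (metis Un_subset_iff)
  have c2: "card (beta G g) = card (ZC m) - card (center G)" using maxc_card_beta[OF m(1) g] .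
  show False using c1 c2 maxc_card_less[OF m(1)] by linarith
qed

theorem conclusion:
  "\<exists>p::nat. Factorial_Ring.prime p \<and> (\<forall>g \<in> carrier G - center G. g [^] p \<in> center G)"
proof -
  obtain x where x: "x \<in> carrier G - center G" using exists_noncentral by blast
  obtain m0 where m0: "maxc m0" using exists_maxc[OF x] by blast
  obtain p :: nat where p: "Factorial_Ring.prime p" "\<forall>a \<in> ZC m0. a [^] p \<in> center G"
    using maxc_prime[OF m0] by blast
  have allp: "\<And>m. maxc m \<Longrightarrow> \<forall>a \<in> ZC m. a [^] p \<in> center G"
  proof -
    fix m assume m: "maxc m"
    obtain q :: nat where q: "Factorial_Ring.prime q" "\<forall>a \<in> ZC m. a [^] q \<in> center G"
      using maxc_prime[OF m] by blast
    have "q = p" using prime_unique[OF m m0 q(1) p(1) q(2) p(2)] .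
    then show "\<forall>a \<in> ZC m. a [^] p \<in> center G" using q(2) by simp
  qed
  show ?thesis using main_pow[OF allp] p(1) by blast
qed

end

context group begin

lemma induced_reg_beta:
  assumes fin: "finite (carrier G)" and ir: "induced_regular G"
    and x: "x \<in> carrier G - center G" and y: "y \<in> carrier G - center G"
  shows "card (beta G x) = card (beta G y)"
proof -
  obtain k where k: "\<forall>x \<in> carrier G - center G. induced_degree G x = k"
    using ir unfolding induced_regular_def by blast
  have key: "card (beta G x) = card (carrier G - center G) - k" if x: "x \<in> carrier G - center G" for x
  proof -
    have bsub: "beta G x \<subseteq> carrier G - center G"
    proof
      fix y assume y: "y \<in> beta G x"
      have yc: "y \<in> carrier G" and e: "centralizer G y = centralizer G x" using y by (auto simp: beta_def)
      have "centralizer G x \<noteq> carrier G" using x by (simp add: center_iff)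
      then have "y \<notin> center G" using e by (simp add: center_iff)
      then show "y \<in> carrier G - center G" using yc by blast
    qed
    have finD: "finite (carrier G - center G)" using fin by simp
    have finB: "finite (beta G x)" using finite_subset[OF bsub finD] .
    have eq: "{y \<in> carrier G - center G. nc_adj G x y} = (carrier G - center G) - beta G x"
    proof (rule Set.set_eqI)
      fix y
      have "nc_adj G x y \<longleftrightarrow> centralizer G y \<noteq> centralizer G x"
        unfolding nc_adj_def by auto
      then show "y \<in> {y \<in> carrier G - center G. nc_adj G x y} \<longleftrightarrow> y \<in> (carrier G - center G) - beta G x"
        by (cases "y \<in> carrier G") (simp_all add: beta_def)
    qed
    have "induced_degree G x = card ((carrier G - center G) - beta G x)"
      unfolding induced_degree_def eq ..
    also have "\<dots> = card (carrier G - center G) - card (beta G x)"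
      using card_Diff_subset[OF finB bsub] .
    finally have "k = card (carrier G - center G) - card (beta G x)" using bspec[OF k x] by simp
    moreover have "card (beta G x) \<le> card (carrier G - center G)" using card_mono[OF finD bsub] .
    ultimately show ?thesis by linarith
  qed
  show ?thesis using key[OF x] key[OF y] by simp
qed

lemma center_normal: "center G \<lhd> G"
proof -
  have sg: "subgroup (center G) G"
  proof (rule subgroupI)
    show "center G \<subseteq> carrier G" using center_sub .
    show "center G \<noteq> {}" using center_one by blast
    show "\<And>a. a \<in> center G \<Longrightarrow> inv a \<in> center G" using center_inv .
    show "\<And>a b. a \<in> center G \<Longrightarrow> b \<in> center G \<Longrightarrow> a \<otimes> b \<in> center G" using center_mult .
  qed
  have "\<forall>x \<in> carrier G. \<forall>h \<in> center G. x \<otimes> h \<otimes> inv x \<in> center G"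
  proof (intro ballI)
    fix x h assume x: "x \<in> carrier G" and h: "h \<in> center G"
    have hc: "h \<in> carrier G" using h center_sub by blast
    have "x \<otimes> h \<otimes> inv x = h \<otimes> x \<otimes> inv x" using center_comm[OF h x] by simp
    also have "\<dots> = h" using x hc by (simp add: m_assoc)
    finally show "x \<otimes> h \<otimes> inv x \<in> center G" using h by simp
  qed
  then show ?thesis using sg normal_inv_iff by blast
qed

end

theorem corollary3p7:
  fixes G :: "('a, 'b) monoid_scheme"
  assumes "group G"
    and "finite (carrier G)"
    and "odd (order G)"
    and "induced_regular G"
    and "\<forall>x \<in> carrier G. centralizer G x \<noteq> beta G x \<union> center G"
  shows "\<exists>p. elementary_p_group (G Mod (center G)) p"
proof -
  interpret group G by fact
  have reg: "\<And>x y. x \<in> carrier G - center G \<Longrightarrow> y \<in> carrier G - center G \<Longrightarrow> card (beta G x) = card (beta G y)"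
    using induced_reg_beta[OF assms(2) assms(4)] by blast
  interpret ncg G
  proof (unfold_locales)
    show "finite (carrier G)" by (rule assms(2))
    show "odd (order G)" by (rule assms(3))
    show "\<And>x y. x \<in> carrier G - center G \<Longrightarrow> y \<in> carrier G - center G \<Longrightarrow> card (beta G x) = card (beta G y)"
      by (rule reg)
    show "\<And>x. x \<in> carrier G \<Longrightarrow> centralizer G x \<noteq> beta G x \<union> center G" using assms(5) by blast
  qed
  obtain p :: nat where p: "Factorial_Ring.prime p" "\<forall>g \<in> carrier G - center G. g [^]\<^bsub>G\<^esub> p \<in> center G"
    using conclusion by blast
  have nZ: "center G \<lhd> G" by (rule center_normal)
  interpret N: normal "center G" G by (rule nZ)
  have sgZ: "subgroup (center G) G" using normal_imp_subgroup[OF nZ] .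
  have grp: "group (G Mod center G)" by (rule N.factorgroup_is_group)
  show ?thesis
    unfolding elementary_p_group_def
  proof (intro exI conjI ballI impI)
    show "Factorial_Ring.prime p" using p(1) .
    fix Y assume Y: "Y \<in> carrier (G Mod center G)" and X1: "Y \<noteq> one (G Mod center G)"
    obtain g where g: "g \<in> carrier G" "Y = center G #>\<^bsub>G\<^esub> g" using Y unfolding carrier_FactGroup by blast
    have gZ: "g \<notin> center G"
    proof
      assume "g \<in> center G"
      then have "center G #>\<^bsub>G\<^esub> g = center G" by (rule coset_join2[OF g(1) sgZ])
      then have "Y = center G" using g(2) by simp
      then show False using X1 by simp
    qed
    have gp: "g [^]\<^bsub>G\<^esub> p \<in> center G" using p(2) g(1) gZ by blast
    have "pow (G Mod center G) Y p = center G #>\<^bsub>G\<^esub> (g [^]\<^bsub>G\<^esub> p)" using N.FactGroup_pow[OF g(1), of p] g(2) by simp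
    also have "\<dots> = center G" using coset_join2[OF nat_pow_closed[OF g(1)] sgZ gp] .
    finally have Xp: "pow (G Mod center G) Y p = one (G Mod center G)" by simp
    have d: "group.ord (G Mod center G) Y dvd p" using group.pow_eq_id[OF grp Y] Xp by simp
    have n1: "group.ord (G Mod center G) Y \<noteq> 1" using group.ord_eq_1[OF grp Y] X1 by simp
    have pr: "\<forall>m. m dvd p \<longrightarrow> m = 1 \<or> m = p" using p(1) prime_nat_iff by blast
    show "group.ord (G Mod center G) Y = p" using pr d n1 by blast
  qed
qed

end
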